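(* Let $\lambda\in\Lambda$. (1) Let $m\ge1$ and $z_0,z_1\in\mathbb C_p$ with $|z_0|=|z_1|=\rho_m$ and $|z_0-z_1|\le S$. Then $|Q_\lambda(z_0)-Q_\lambda(z_1)|\le\rho_{m-1}|z_0-z_1|$. (2) If $z_0,z_1\in\{z:|z-1|<1\}$, then $|Q_\lambda(z_0)-Q_\lambda(z_1)|=p\,|z_0-z_1|$.
   Context: Let $p$ be a prime, $\mathbb C_p$ with $p$-adic absolute value, $|p|=1/p$. $\Lambda=\{\lambda\in\mathbb C_p:|\lambda-1|<1\}$, $P_\lambda(z)=\frac{\lambda}{p}z^p+\left(1-\frac{\lambda}{p}\right)z^{p+1}$, $\rho=p^{-1/(p-1)}$; $S>0$ is defined by $pS^{p-1}=\rho$; the sequence $(\rho_n)_{n\ge0}$ is defined by $\rho_0=1$ and $p\rho_n^p=\rho_{n-1}$ for $n\ge1$. Fix $\hat r\in|\mathbb C_p^*|$, $\hat r>1$, $B=\{z:|z|\le\hat r\}$; $\mathcal H(B)$ is the ring of power series $\sum a_iz^i$ convergent on $B$ with norm $\|f\|_B=\sup_i|a_i|\hat r^{\,i}$. Fix $Q\in\mathcal H(B)$ with $\|Q\|_B<\rho$, $Q^*_\lambda=P_\lambda+Q$, and let $h(\lambda)$ be the unique fixed point of $Q^*_\lambda$ in $\{z:|z-1|\le|Q(1)|/p\}$. Define $Q_\lambda(z)=P_\lambda(z+h(\lambda)-1)+Q(z+h(\lambda)-1)+1-h(\lambda)$ for $z\in B$. *)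

theory Defs
  imports "HOL-Analysis.Analysis" "HOL-Computational_Algebra.Polynomial"
begin

text \<open>These properties characterise C_p up to isometric
  isomorphism (C_p is the completion of the algebraic closure of Q_p).\<close>
definition is_Cp :: "nat \<Rightarrow> ('a::field_char_0 \<Rightarrow> real) \<Rightarrow> bool" where
  "is_Cp p nv \<longleftrightarrow>
     (\<forall>x. nv x \<ge> 0) \<and> (\<forall>x. nv x = 0 \<longleftrightarrow> x = 0) \<and>
     (\<forall>x y. nv (x * y) = nv x * nv y) \<and>
     (\<forall>x y. nv (x + y) \<le> max (nv x) (nv y)) \<and>
     nv (of_nat p) = 1 / real p \<and>
     (\<forall>X::nat \<Rightarrow> 'a. (\<forall>e>0. \<exists>N. \<forall>m\<ge>N. \<forall>n\<ge>N. nv (X m - X n) < e) \<longrightarrow>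
        (\<exists>L. (\<lambda>n. nv (X n - L)) \<longlonglongrightarrow> 0)) \<and>
     (\<forall>q::'a poly. degree q > 0 \<longrightarrow> (\<exists>z. poly q z = 0)) \<and>
     (\<forall>x e. e > 0 \<longrightarrow> (\<exists>y. (\<exists>q::rat poly. q \<noteq> 0 \<and> poly (map_poly of_rat q) y = 0)
                              \<and> nv (x - y) < e))"

definition nv_sums :: "('a::field \<Rightarrow> real) \<Rightarrow> (nat \<Rightarrow> 'a) \<Rightarrow> 'a \<Rightarrow> bool" where
  "nv_sums nv f s \<longleftrightarrow> (\<lambda>n. nv ((\<Sum>i<n. f i) - s)) \<longlonglongrightarrow> 0"

definition pseries :: "('a::field \<Rightarrow> real) \<Rightarrow> (nat \<Rightarrow> 'a) \<Rightarrow> 'a \<Rightarrow> 'a" where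
  "pseries nv a z = (THE s. nv_sums nv (\<lambda>i. a i * z ^ i) s)"

text \<open>a lies in H(B), B the closed disc of radius r: the series converges on B,
  i.e. |a_i| r^i tends to 0 (non-archimedean setting).\<close>
definition in_HB :: "('a::field \<Rightarrow> real) \<Rightarrow> real \<Rightarrow> (nat \<Rightarrow> 'a) \<Rightarrow> bool" where
  "in_HB nv r a \<longleftrightarrow> (\<lambda>i. nv (a i) * r ^ i) \<longlonglongrightarrow> 0"

definition normB :: "('a::field \<Rightarrow> real) \<Rightarrow> real \<Rightarrow> (nat \<Rightarrow> 'a) \<Rightarrow> real" where
  "normB nv r a = (SUP i. nv (a i) * r ^ i)"

definition Pl :: "nat \<Rightarrow> 'a::field \<Rightarrow> 'a \<Rightarrow> 'a" where
  "Pl p l z = (l / of_nat p) * z ^ p + (1 - l / of_nat p) * z ^ (p + 1)"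

definition rho :: "nat \<Rightarrow> real" where
  "rho p = real p powr (- 1 / (real p - 1))"

text \<open>S > 0 with p S^(p-1) = rho.\<close>
definition Sc :: "nat \<Rightarrow> real" where
  "Sc p = (rho p / real p) powr (1 / (real p - 1))"

text \<open>rho_0 = 1, p rho_n^p = rho_(n-1).\<close>
fun rhon :: "nat \<Rightarrow> nat \<Rightarrow> real" where
  "rhon p 0 = 1"
| "rhon p (Suc n) = (rhon p n / real p) powr (1 / real p)"

definition hfix :: "nat \<Rightarrow> ('a::field \<Rightarrow> real) \<Rightarrow> (nat \<Rightarrow> 'a) \<Rightarrow> 'a \<Rightarrow> 'a" where
  "hfix p nv a l = (THE z. nv (z - 1) \<le> nv (pseries nv a 1) / real p \<and>
                          Pl p l z + pseries nv a z = z)"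

definition Qlam :: "nat \<Rightarrow> ('a::field \<Rightarrow> real) \<Rightarrow> (nat \<Rightarrow> 'a) \<Rightarrow> 'a \<Rightarrow> 'a \<Rightarrow> 'a" where
  "Qlam p nv a l z = (let h = hfix p nv a l in
      Pl p l (z + h - 1) + pseries nv a (z + h - 1) + 1 - h)"

end

theory Submission
  imports Defs
begin


lemma powr_inv_pow: "(x::real) > 0 \<Longrightarrow> n > 0 \<Longrightarrow> (x powr (1 / real n)) ^ n = x"
proof -
  assume x: "x > 0" and n: "n > 0"
  have "(x powr (1 / real n)) ^ n = x powr (real n * (1 / real n))" by (rule powr_power) (use x in simp)
  also have "\<dots> = x" using n x by simp
  finally show ?thesis .
qed

lemma real_facts:
  fixes p :: nat assumes p2: "p \<ge> 2"
  shows "rho p > 0" "rho p ^ (p - 1) = 1 / real p" "rho p < 1" "1 / real p \<le> rho p"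
    "rho p ^ p = rho p / real p"
    "Sc p > 0" "Sc p ^ (p - 1) = rho p / real p" "Sc p < rho p"
proof -
  have pp: "real p > 0" "real p \<ge> 2" using p2 by auto
  have pm: "real (p - 1) = real p - 1" using p2 by auto
  show r0: "rho p > 0" unfolding rho_def using pp by simp
  have "rho p ^ (p - 1) = real p powr (real (p-1) * (- 1 / (real p - 1)))"
    unfolding rho_def by (rule powr_power) (use pp in simp)
  also have "\<dots> = real p powr (-1)" using pm pp p2 by (simp add: field_simps)
  finally show r1: "rho p ^ (p - 1) = 1 / real p" by (simp add: powr_minus_divide)
  show r2: "rho p < 1"
  proof (rule ccontr)
    assume "\<not> rho p < 1"
    hence "1 \<le> rho p ^ (p-1)" by (intro one_le_power) simp
    thus False using r1 pp by simp
  qed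
  have "rho p ^ (p-1) \<le> rho p ^ 1" by (rule power_decreasing) (use p2 r0 r2 in auto)
  thus "1 / real p \<le> rho p" using r1 by simp
  obtain k where k: "p = Suc k" using p2 by (cases p) auto
  have "rho p ^ p = rho p * rho p ^ (p-1)" unfolding k by simp
  thus "rho p ^ p = rho p / real p" using r1 by simp
  show s0: "Sc p > 0" unfolding Sc_def using pp r0 by simp
  have "Sc p ^ (p - 1) = (rho p / real p) powr (real (p-1) * (1 / (real p - 1)))"
    unfolding Sc_def by (rule powr_power) (use pp r0 in simp)
  also have "\<dots> = rho p / real p" using pm pp p2 r0 by (simp add: field_simps)
  finally show s1: "Sc p ^ (p - 1) = rho p / real p" .
  have "Sc p ^ (p-1) < rho p ^ (p-1)" using s1 r1 r2 pp by (simp add: divide_strict_right_mono)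
  thus "Sc p < rho p" by (rule power_less_imp_less_base) (use r0 in simp)
qed

lemma rhon_facts:
  fixes p :: nat assumes p2: "p \<ge> 2"
  shows "rho p < rhon p n \<and> rhon p n \<le> 1"
proof (induction n)
  case 0 then show ?case using real_facts[OF p2] by simp
next
  case (Suc n)
  have pp: "real p > 0" using p2 by auto
  have pos: "rhon p n / real p > 0" using Suc real_facts[OF p2] pp by auto
  have e: "rhon p (Suc n) ^ p = rhon p n / real p"
    using pos pp by (simp add: powr_inv_pow)
  have g0: "rhon p (Suc n) \<ge> 0" by simp
  have "rho p ^ p < rhon p (Suc n) ^ p" using e real_facts[OF p2] Suc pp
    by (simp add: divide_strict_right_mono)
  hence a: "rho p < rhon p (Suc n)" by (rule power_less_imp_less_base) (use g0 in simp)
  obtain k where k: "p = Suc k" using p2 by (cases p) auto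
  have "rhon p (Suc n) ^ Suc k \<le> 1 ^ Suc k" using e Suc pp p2 k by (simp add: divide_le_eq)
  hence "rhon p (Suc n) \<le> 1" by (rule power_le_imp_le_base) simp
  with a show ?case by simp
qed

lemma rhon_Suc_pow:
  fixes p :: nat assumes p2: "p \<ge> 2"
  shows "real p * rhon p (Suc k) ^ p = rhon p k"
proof -
  have pp: "real p > 0" using p2 by auto
  have pos: "rhon p k / real p > 0" using rhon_facts[OF p2, of k] real_facts[OF p2] pp by auto
  have e: "rhon p (Suc k) ^ p = rhon p k / real p"
    using pos pp by (simp add: powr_inv_pow)
  thus ?thesis using pp by simp
qed



locale cp =
  fixes p :: nat and nv :: "'a::field_char_0 \<Rightarrow> real"
  assumes pr: "prime p" and cpa: "is_Cp p nv"
begin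

lemmas cpu = cpa[unfolded is_Cp_def]
lemma nv_nonneg[simp]: "nv x \<ge> 0" using cpu[THEN conjunct1] by blast
lemma nv_zero[simp]: "nv x = 0 \<longleftrightarrow> x = 0" using cpu[THEN conjunct2, THEN conjunct1] by blast
lemma nv_mult: "nv (x*y) = nv x * nv y" using cpu[THEN conjunct2, THEN conjunct2, THEN conjunct1] by blast
lemma nv_add: "nv (x+y) \<le> max (nv x) (nv y)" using cpu[THEN conjunct2, THEN conjunct2, THEN conjunct2, THEN conjunct1] by blast
lemma nv_p: "nv (of_nat p) = 1 / real p" using cpu[THEN conjunct2, THEN conjunct2, THEN conjunct2, THEN conjunct2, THEN conjunct1] by blast
lemma complete: "(\<forall>e>0. \<exists>N. \<forall>m\<ge>N. \<forall>n\<ge>N. nv (X m - X n) < e) \<Longrightarrow> \<exists>L. (\<lambda>n. nv (X n - L)) \<longlonglongrightarrow> 0"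
  using cpu[THEN conjunct2, THEN conjunct2, THEN conjunct2, THEN conjunct2, THEN conjunct2, THEN conjunct1] by blast
lemma nv_0[simp]: "nv 0 = 0" by simp
lemma p2: "p \<ge> 2" using pr prime_ge_2_nat by blast

lemma nv_one[simp]: "nv 1 = 1"
proof -
  have "nv 1 = nv 1 * nv 1" using nv_mult[of 1 1] by simp
  moreover have "nv 1 \<noteq> 0" by simp
  ultimately show ?thesis by simp
qed

lemma nv_minus[simp]: "nv (-x) = nv x"
proof -
  have "nv (-1) * nv (-1) = 1" using nv_mult[of "-1" "-1"] by simp
  hence "nv (-1) = 1" using nv_nonneg[of "-1"]
    by (metis abs_of_nonneg abs_square_eq_1 power2_eq_square)
  thus ?thesis using nv_mult[of "-1" x] by simp
qed

lemma nv_diff_comm: "nv (x - y) = nv (y - x)"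
  by (metis minus_diff_eq nv_minus)

lemma nv_diff: "nv (x - y) \<le> max (nv x) (nv y)"
  using nv_add[of x "-y"] by simp

lemma nv_add_le: "nv x \<le> M \<Longrightarrow> nv y \<le> M \<Longrightarrow> nv (x+y) \<le> M"
  using nv_add[of x y] by simp

lemma nv_diff_le: "nv x \<le> M \<Longrightarrow> nv y \<le> M \<Longrightarrow> nv (x-y) \<le> M"
  using nv_diff[of x y] by simp

lemma nv_power: "nv (x^n) = nv x ^ n"
  by (induction n) (simp_all add: nv_mult)

lemma nv_divide: "nv (x / y) = nv x / nv y"
proof (cases "y = 0")
  case True then show ?thesis by simp
next
  case False
  have "nv x = nv (x / y) * nv y" using nv_mult[of "x/y" y] False by simp
  then show ?thesis using False by simp
qed

lemma nv_of_nat_le: "nv (of_nat n) \<le> 1"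
  by (induction n) (simp_all add: nv_add_le)

lemma nv_strict: "nv x < nv y \<Longrightarrow> nv (x + y) = nv y"
proof -
  assume a: "nv x < nv y"
  have "nv (x+y) \<le> nv y" using nv_add[of x y] a by simp
  moreover have "nv y \<le> max (nv (x+y)) (nv x)" using nv_diff[of "x+y" x] by simp
  ultimately show ?thesis using a by linarith
qed

lemma nv_strict': "nv y < nv x \<Longrightarrow> nv (x + y) = nv x"
  using nv_strict[of y x] by (simp add: add.commute)

lemma nv_pow_diff:
  assumes "nv x \<le> R" "nv y \<le> R"
  shows "nv (x ^ Suc n - y ^ Suc n) \<le> R ^ n * nv (x - y)"
proof (induction n)
  case 0 then show ?case by simp
next
  case (Suc n)
  have R0: "R \<ge> 0" using assms(1) nv_nonneg order_trans by blast
  have e: "x ^ Suc (Suc n) - y ^ Suc (Suc n) = x * (x ^ Suc n - y ^ Suc n) + y ^ Suc n * (x - y)"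
    by (simp add: algebra_simps)
  have "nv (x * (x ^ Suc n - y ^ Suc n)) \<le> R * (R ^ n * nv (x - y))"
    unfolding nv_mult by (rule mult_mono) (use assms Suc R0 in auto)
  moreover have "nv (y ^ Suc n * (x - y)) \<le> R ^ Suc n * nv (x - y)"
  proof -
    have "nv y ^ Suc n \<le> R ^ Suc n" by (rule power_mono) (use assms in auto)
    thus ?thesis unfolding nv_mult nv_power by (rule mult_right_mono) simp
  qed
  ultimately show ?case unfolding e by (intro nv_add_le) auto
qed

lemma nv_pow_diff1:
  assumes "nv x \<le> 1" "nv y \<le> 1"
  shows "nv (x ^ n - y ^ n) \<le> nv (x - y)"
proof (cases n)
  case 0 then show ?thesis by simp
next
  case (Suc k) then show ?thesis using nv_pow_diff[OF assms, of k] by simp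
qed

lemma nv_sum_le: "finite A \<Longrightarrow> (\<And>i. i \<in> A \<Longrightarrow> nv (f i) \<le> M) \<Longrightarrow> 0 \<le> M \<Longrightarrow> nv (sum f A) \<le> M"
  by (induction A rule: finite_induct) (auto intro: nv_add_le)

lemma nv_choose: "0 < k \<Longrightarrow> k < p \<Longrightarrow> nv (of_nat (p choose k)) \<le> 1 / real p"
proof -
  assume k: "0 < k" "k < p"
  have "p dvd (p choose k)" by (rule dvd_choose_prime) (use k pr in auto)
  then obtain q where q: "p choose k = p * q" by blast
  have "nv (of_nat (p choose k)) = 1 / real p * nv (of_nat q)" unfolding q by (simp add: nv_mult nv_p)
  also have "\<dots> \<le> 1 / real p * 1" by (rule mult_left_mono) (use nv_of_nat_le in auto)
  finally show ?thesis by simp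
qed

lemma lim_unique: "nv_sums nv f s \<Longrightarrow> nv_sums nv f t \<Longrightarrow> s = t"
proof -
  assume a: "nv_sums nv f s" "nv_sums nv f t"
  let ?S = "\<lambda>n. (\<Sum>i<n. f i)"
  have "\<forall>n. nv (s - t) \<le> max (nv (?S n - s)) (nv (?S n - t))"
  proof
    fix n have "s - t = (?S n - t) - (?S n - s)" by simp
    thus "nv (s - t) \<le> max (nv (?S n - s)) (nv (?S n - t))" using nv_diff[of "?S n - t" "?S n - s"] by (simp add: max.commute)
  qed
  moreover have "(\<lambda>n. max (nv (?S n - s)) (nv (?S n - t))) \<longlonglongrightarrow> max 0 0"
    using a unfolding nv_sums_def by (intro tendsto_max)
  ultimately have "nv (s - t) \<le> 0" using LIMSEQ_le_const by (metis (no_types, lifting) max.idem)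
  thus ?thesis by (metis nv_nonneg nv_zero order_antisym_conv right_minus_eq)
qed

lemma lim_bound:
  assumes "(\<lambda>n. nv (X n - s)) \<longlonglongrightarrow> 0" "\<And>n. nv (X n) \<le> M"
  shows "nv s \<le> M"
proof (rule ccontr)
  assume "\<not> nv s \<le> M"
  hence m: "M < nv s" by simp
  hence "nv s > 0" using assms(2)[of 0] nv_nonneg[of "X 0"] by linarith
  then have "eventually (\<lambda>n. nv (X n - s) < nv s) sequentially"
    using assms(1) order_tendstoD(2) by blast
  then obtain n where n: "nv (X n - s) < nv s" using eventually_sequentially by auto
  have "s = X n - (X n - s)" by simp
  hence "nv s \<le> max (nv (X n)) (nv (X n - s))" using nv_diff by metis
  thus False using n m assms(2)[of n] by linarith
qed

lemma zero_lim:
  assumes "\<And>n. nv c \<le> f n" "f \<longlonglongrightarrow> 0"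
  shows "c = 0"
proof -
  have "nv c \<le> 0" using assms(2) by (rule LIMSEQ_le_const) (use assms(1) in auto)
  thus ?thesis using nv_nonneg[of c] by simp
qed

lemma series_conv:
  assumes t: "(\<lambda>i. nv (f i)) \<longlonglongrightarrow> 0"
  shows "\<exists>s. nv_sums nv f s"
proof -
  let ?S = "\<lambda>n. (\<Sum>i<n. f i)"
  have "\<forall>e>0. \<exists>N. \<forall>m\<ge>N. \<forall>n\<ge>N. nv (?S m - ?S n) < e"
  proof (intro allI impI)
    fix e :: real assume e: "e > 0"
    have "eventually (\<lambda>i. nv (f i) < e / 2) sequentially"
      by (rule order_tendstoD(2)[OF t]) (use e in simp)
    then obtain N where N: "\<And>i. i \<ge> N \<Longrightarrow> nv (f i) < e / 2" using eventually_sequentially by auto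
    have k: "nv (?S (n + k) - ?S n) \<le> e / 2" if "n \<ge> N" for n k
    proof (induction k)
      case 0 then show ?case using e by simp
    next
      case (Suc k)
      have "?S (n + Suc k) - ?S n = (?S (n + k) - ?S n) + f (n + k)" by simp
      moreover have "nv (f (n+k)) \<le> e / 2" using N[of "n+k"] that by simp
      ultimately show ?case using Suc by (metis nv_add_le)
    qed
    have le: "nv (?S m - ?S n) \<le> e / 2" if "m \<ge> N" "n \<ge> N" for m n
    proof (cases "m \<ge> n")
      case True
      then show ?thesis using k[of n "m - n"] that by simp
    next
      case False
      then have "n = m + (n - m)" by simp
      then have "nv (?S n - ?S m) \<le> e / 2" using k[of m "n - m"] that by simp
      then show ?thesis using nv_diff_comm[of "?S n" "?S m"] by simp
    qed
    have e2: "e / 2 < e" using e by simp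
    show "\<exists>N. \<forall>m\<ge>N. \<forall>n\<ge>N. nv (?S m - ?S n) < e"
    proof (intro exI allI impI)
      fix m n assume "m \<ge> N" "n \<ge> N"
      show "nv (?S m - ?S n) < e" using le[OF \<open>m \<ge> N\<close> \<open>n \<ge> N\<close>] e2 by linarith
    qed
  qed
  from complete[of ?S, OF this] obtain L where "(\<lambda>n. nv (?S n - L)) \<longlonglongrightarrow> 0" by blast
  thus ?thesis unfolding nv_sums_def by blast
qed

end


locale cpQ = cp p nv for p and nv :: "'a::field_char_0 \<Rightarrow> real" +
  fixes a :: "nat \<Rightarrow> 'a" and rhat :: real and l :: 'a
  assumes rhat: "rhat > 1" and hb: "in_HB nv rhat a" and nb: "normB nv rhat a < rho p"
    and lam: "nv (l - 1) < 1"
begin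

abbreviation "NB \<equiv> normB nv rhat a"
abbreviation "Q \<equiv> pseries nv a"
definition "F z = Pl p l z + Q z"
definition "c = l / of_nat p"

lemma coef_bound: "nv (a i) \<le> NB"
proof -
  have "(\<lambda>i. nv (a i) * rhat ^ i) \<longlonglongrightarrow> 0" using hb unfolding in_HB_def .
  hence "Bseq (\<lambda>i. nv (a i) * rhat ^ i)" by (intro convergent_imp_Bseq convergentI)
  then obtain K where K: "\<And>i. norm (nv (a i) * rhat ^ i) \<le> K" unfolding Bseq_def by blast
  have bdd: "bdd_above (range (\<lambda>i. nv (a i) * rhat ^ i))"
  proof (rule bdd_aboveI2)
    fix i
    have "\<bar>nv (a i) * rhat ^ i\<bar> \<le> K" using K[of i] by simp
    thus "nv (a i) * rhat ^ i \<le> K" by (rule abs_le_D1)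
  qed
  have "nv (a i) * rhat ^ i \<le> NB" unfolding normB_def by (rule cSUP_upper[OF _ bdd]) simp
  moreover have "nv (a i) \<le> nv (a i) * rhat ^ i"
  proof -
    have "1 \<le> rhat ^ i" using rhat by (intro one_le_power) simp
    thus ?thesis using mult_left_mono[of 1 "rhat ^ i" "nv (a i)"] by simp
  qed
  ultimately show ?thesis by linarith
qed

lemma NB_nonneg: "NB \<ge> 0" using coef_bound[of 0] nv_nonneg[of "a 0"] by linarith
lemma NB_rho: "NB < rho p" using nb .
lemma NB_lt1: "NB < 1" using nb real_facts(3)[OF p2] by linarith

lemma ps_sums:
  assumes z: "nv z \<le> 1"
  shows "nv_sums nv (\<lambda>i. a i * z ^ i) (Q z)"
proof -
  have t: "(\<lambda>i. nv (a i * z ^ i)) \<longlonglongrightarrow> 0"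
  proof (rule tendsto_sandwich[of "\<lambda>_. 0" _ _ "\<lambda>i. nv (a i) * rhat ^ i"])
    show "\<forall>\<^sub>F n in sequentially. 0 \<le> nv (a n * z ^ n)" by simp
    show "\<forall>\<^sub>F n in sequentially. nv (a n * z ^ n) \<le> nv (a n) * rhat ^ n"
    proof (rule always_eventually, rule allI)
      fix n
      have "nv z ^ n \<le> rhat ^ n" by (rule power_mono) (use z rhat in auto)
      thus "nv (a n * z ^ n) \<le> nv (a n) * rhat ^ n" unfolding nv_mult nv_power
        by (rule mult_left_mono) simp
    qed
    show "(\<lambda>i. nv (a i) * rhat ^ i) \<longlonglongrightarrow> 0" using hb unfolding in_HB_def .
  qed simp
  have ex: "\<exists>!s. nv_sums nv (\<lambda>i. a i * z ^ i) s"
    using series_conv[OF t] lim_unique by blast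
  show ?thesis unfolding pseries_def by (rule theI'[OF ex])
qed

lemma Q_lip:
  assumes x: "nv x \<le> 1" and y: "nv y \<le> 1"
  shows "nv (Q x - Q y) \<le> NB * nv (x - y)"
proof -
  let ?Sx = "\<lambda>n. (\<Sum>i<n. a i * x ^ i)" and ?Sy = "\<lambda>n. (\<Sum>i<n. a i * y ^ i)"
  have sx: "(\<lambda>n. nv (?Sx n - Q x)) \<longlonglongrightarrow> 0" using ps_sums[OF x] unfolding nv_sums_def .
  have sy: "(\<lambda>n. nv (?Sy n - Q y)) \<longlonglongrightarrow> 0" using ps_sums[OF y] unfolding nv_sums_def .
  have lim: "(\<lambda>n. nv ((?Sx n - ?Sy n) - (Q x - Q y))) \<longlonglongrightarrow> 0"
  proof (rule tendsto_sandwich[of "\<lambda>_. 0" _ _ "\<lambda>n. max (nv (?Sx n - Q x)) (nv (?Sy n - Q y))"])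
    show "\<forall>\<^sub>F n in sequentially. 0 \<le> nv ((?Sx n - ?Sy n) - (Q x - Q y))" by simp
    show "\<forall>\<^sub>F n in sequentially. nv ((?Sx n - ?Sy n) - (Q x - Q y)) \<le> max (nv (?Sx n - Q x)) (nv (?Sy n - Q y))"
    proof (rule always_eventually, rule allI)
      fix n
      have e: "(?Sx n - ?Sy n) - (Q x - Q y) = (?Sx n - Q x) - (?Sy n - Q y)" by simp
      show "nv ((?Sx n - ?Sy n) - (Q x - Q y)) \<le> max (nv (?Sx n - Q x)) (nv (?Sy n - Q y))"
        unfolding e by (rule nv_diff)
    qed
    show "(\<lambda>n. max (nv (?Sx n - Q x)) (nv (?Sy n - Q y))) \<longlonglongrightarrow> 0"
      using tendsto_max[OF sx sy] by simp
  qed simp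
  have bd: "nv (?Sx n - ?Sy n) \<le> NB * nv (x - y)" for n
  proof -
    have e: "?Sx n - ?Sy n = (\<Sum>i<n. a i * (x ^ i - y ^ i))"
      by (simp add: sum_subtractf algebra_simps)
    show ?thesis unfolding e
    proof (rule nv_sum_le)
      fix i
      have "nv (a i) * nv (x ^ i - y ^ i) \<le> NB * nv (x - y)"
        by (rule mult_mono) (use coef_bound nv_pow_diff1[OF x y] NB_nonneg in auto)
      thus "nv (a i * (x ^ i - y ^ i)) \<le> NB * nv (x - y)" by (simp add: nv_mult)
    qed (use NB_nonneg in auto)
  qed
  show ?thesis by (rule lim_bound[OF lim bd])
qed

lemma Q1_bound: "nv (Q 1) \<le> NB"
proof -
  have s: "(\<lambda>n. nv ((\<Sum>i<n. a i * 1 ^ i) - Q 1)) \<longlonglongrightarrow> 0" using ps_sums[of 1] unfolding nv_sums_def by simp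
  show ?thesis
  proof (rule lim_bound[OF s])
    fix n show "nv (\<Sum>i<n. a i * 1 ^ i) \<le> NB"
      by (rule nv_sum_le) (use coef_bound NB_nonneg in auto)
  qed
qed

lemma nv_l: "nv l = 1"
proof -
  have "nv ((l - 1) + 1) = nv 1" by (rule nv_strict) (use lam in simp)
  thus ?thesis by simp
qed

lemma nv_c: "nv c = real p"
  unfolding c_def nv_divide nv_p nv_l using p2 by simp

lemma Pl_diff: "Pl p l w0 - Pl p l w1 = (w0 ^ (p+1) - w1 ^ (p+1)) + c * ((w0 ^ p - w1 ^ p) - (w0 ^ (p+1) - w1 ^ (p+1)))"
  unfolding Pl_def c_def by (simp add: algebra_simps)

lemma E_id: "((w0::'a) ^ p - w1 ^ p) - (w0 ^ (p+1) - w1 ^ (p+1)) = - (w0 ^ p * (w0 - w1) + (w1 - 1) * (w0 ^ p - w1 ^ p))"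
proof -
  have h: "X - Y - (X * w0 - Y * w1) = - (X * (w0 - w1) + (w1 - 1) * (X - Y))" for X Y :: 'a
    by (simp add: algebra_simps)
  have a: "w0 ^ (p+1) = w0 ^ p * w0" "w1 ^ (p+1) = w1 ^ p * w1" by simp_all
  show ?thesis unfolding a by (rule h)
qed

end


context cpQ begin

lemma Dp_bound:
  assumes w: "nv w0 \<le> R" "nv w1 \<le> R" and Rp: "1 / real p \<le> R"
    and dR: "nv (w0 - w1) \<le> R" and dp: "nv (w0 - w1) ^ p \<le> R ^ p * nv (w0 - w1)"
  shows "nv (w0 ^ p - w1 ^ p) \<le> R ^ p * nv (w0 - w1)"
proof -
  define d where "d = w0 - w1"
  have R0: "R \<ge> 0" using w(1) nv_nonneg order_trans by blast
  obtain k where k: "p = Suc k" using p2 by (cases p) auto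
  define g where "g j = of_nat (p choose j) * d ^ j * w1 ^ (p - j)" for j
  have "w0 ^ p = (d + w1) ^ p" unfolding d_def by simp
  also have "\<dots> = (\<Sum>j\<le>p. g j)" unfolding g_def by (rule binomial_ring)
  also have "\<dots> = g 0 + (\<Sum>j\<le>k. g (Suc j))" unfolding k by (rule sum.atMost_Suc_shift)
  finally have e: "w0 ^ p - w1 ^ p = (\<Sum>j\<le>k. g (Suc j))" unfolding g_def by simp
  have tb: "nv (g (Suc j)) \<le> R ^ p * nv d" if j: "j \<le> k" for j
  proof (cases "j = k")
    case True
    then show ?thesis using dp unfolding g_def d_def k by (simp add: nv_mult nv_power)
  next
    case False
    hence jk: "j < k" using j by simp
    have ch: "nv (of_nat (p choose Suc j) :: 'a) \<le> 1 / real p" by (rule nv_choose) (use jk k in auto)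
    have dj: "nv d ^ Suc j \<le> nv d * R ^ j"
    proof -
      have "nv d ^ j \<le> R ^ j" by (rule power_mono) (use dR d_def in auto)
      thus ?thesis by (simp add: mult_left_mono)
    qed
    have wj: "nv w1 ^ (p - Suc j) \<le> R ^ (p - Suc j)" by (rule power_mono) (use w in auto)
    have "nv (g (Suc j)) = nv (of_nat (p choose Suc j) :: 'a) * (nv d ^ Suc j * nv w1 ^ (p - Suc j))"
      unfolding g_def by (simp add: nv_mult nv_power)
    also have "\<dots> \<le> (1 / real p) * ((nv d * R ^ j) * R ^ (p - Suc j))"
      by (intro mult_mono dj wj ch) (use R0 in auto)
    also have "(nv d * R ^ j) * R ^ (p - Suc j) = nv d * R ^ k"
    proof -
      have "j + (p - Suc j) = k" using jk k by simp
      hence "R ^ j * R ^ (p - Suc j) = R ^ k" by (metis power_add)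
      thus ?thesis by (simp add: mult.assoc)
    qed
    also have "(1 / real p) * (nv d * R ^ k) \<le> R * (nv d * R ^ k)"
      by (rule mult_right_mono) (use Rp R0 in auto)
    also have "R * (nv d * R ^ k) = R ^ p * nv d" unfolding k by (simp add: algebra_simps)
    finally show ?thesis .
  qed
  show ?thesis unfolding e d_def[symmetric]
    by (rule nv_sum_le) (use tb R0 in auto)
qed

lemma K1:
  assumes w: "nv w0 \<le> R" "nv w1 \<le> R" and R1: "R \<le> 1" and Rp: "1 / real p \<le> R"
    and dR: "nv (w0 - w1) \<le> R" and dp: "nv (w0 - w1) ^ p \<le> R ^ p * nv (w0 - w1)"
    and NR: "NB \<le> real p * R ^ p"
  shows "nv (F w0 - F w1) \<le> real p * R ^ p * nv (w0 - w1)"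
proof -
  have R0: "R \<ge> 0" using w(1) nv_nonneg order_trans by blast
  have pp: "real p \<ge> 1" using p2 by simp
  let ?d = "w0 - w1"
  let ?M = "real p * R ^ p * nv ?d"
  have b1: "nv (w0 ^ (p+1) - w1 ^ (p+1)) \<le> R ^ p * nv ?d" using nv_pow_diff[OF w, of p] by simp
  have b2: "nv (w0 ^ p - w1 ^ p) \<le> R ^ p * nv ?d" by (rule Dp_bound[OF w Rp dR dp])
  have Rd: "R ^ p * nv ?d \<le> ?M"
    using mult_right_mono[OF pp, of "R ^ p * nv ?d"] R0 by (simp add: algebra_simps)
  have "nv (c * ((w0 ^ p - w1 ^ p) - (w0 ^ (p+1) - w1 ^ (p+1)))) \<le> ?M"
  proof -
    have "nv ((w0 ^ p - w1 ^ p) - (w0 ^ (p+1) - w1 ^ (p+1))) \<le> R ^ p * nv ?d"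
      using b1 b2 by (rule nv_diff_le[rotated]) 
    hence "real p * nv ((w0 ^ p - w1 ^ p) - (w0 ^ (p+1) - w1 ^ (p+1))) \<le> real p * (R ^ p * nv ?d)"
      by (rule mult_left_mono) simp
    thus ?thesis by (simp add: nv_mult nv_c mult.assoc)
  qed
  moreover have "nv (w0 ^ (p+1) - w1 ^ (p+1)) \<le> ?M" using b1 Rd by linarith
  moreover have "nv (Q w0 - Q w1) \<le> ?M"
  proof -
    have "nv (Q w0 - Q w1) \<le> NB * nv ?d" by (rule Q_lip) (use w R1 in auto)
    also have "\<dots> \<le> real p * R ^ p * nv ?d" by (rule mult_right_mono[OF NR]) simp
    finally show ?thesis .
  qed
  moreover have "F w0 - F w1 = ((w0 ^ (p+1) - w1 ^ (p+1)) + c * ((w0 ^ p - w1 ^ p) - (w0 ^ (p+1) - w1 ^ (p+1)))) + (Q w0 - Q w1)"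
    unfolding F_def using Pl_diff[of w0 w1] by (simp add: algebra_simps)
  ultimately show ?thesis by (metis nv_add_le)
qed

lemma nv_near1: "nv (w - 1) < 1 \<Longrightarrow> nv w = 1"
proof -
  assume "nv (w - 1) < 1"
  hence "nv ((w - 1) + 1) = nv 1" by (intro nv_strict) simp
  thus ?thesis by simp
qed

lemma K2:
  assumes u: "nv (w0 - 1) < 1" "nv (w1 - 1) < 1"
  shows "nv (F w0 - F w1) = real p * nv (w0 - w1)"
proof (cases "w0 = w1")
  case True then show ?thesis by simp
next
  case False
  let ?d = "w0 - w1"
  have d0: "nv ?d > 0" using False by (simp add: less_le)
  have n0: "nv w0 = 1" and n1: "nv w1 = 1" using nv_near1 u by auto
  have pp: "real p \<ge> 2" using p2 by simp
  have Dp: "nv (w0 ^ p - w1 ^ p) \<le> nv ?d" by (rule nv_pow_diff1) (use n0 n1 in auto)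
  have Dp1: "nv (w0 ^ (p+1) - w1 ^ (p+1)) \<le> nv ?d" by (rule nv_pow_diff1) (use n0 n1 in auto)
  let ?X = "w0 ^ p * ?d" and ?Y = "(w1 - 1) * (w0 ^ p - w1 ^ p)"
  have nX: "nv ?X = nv ?d" by (simp add: nv_mult nv_power n0)
  have "nv ?Y \<le> nv (w1 - 1) * nv ?d" unfolding nv_mult by (rule mult_left_mono[OF Dp]) simp
  also have "\<dots> < nv ?d" using u(2) d0 by simp
  finally have nY: "nv ?Y < nv ?X" using nX by simp
  let ?E = "(w0 ^ p - w1 ^ p) - (w0 ^ (p+1) - w1 ^ (p+1))"
  have nE: "nv ?E = nv ?d" unfolding E_id nv_minus using nv_strict'[OF nY] nX by simp
  have ncE: "nv (c * ?E) = real p * nv ?d" unfolding nv_mult nv_c nE ..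
  let ?r = "(w0 ^ (p+1) - w1 ^ (p+1)) + (Q w0 - Q w1)"
  have "nv ?r \<le> nv ?d"
  proof (rule nv_add_le[OF Dp1])
    have "nv (Q w0 - Q w1) \<le> NB * nv ?d" by (rule Q_lip) (use n0 n1 in auto)
    also have "\<dots> \<le> 1 * nv ?d" by (rule mult_right_mono) (use NB_lt1 in auto)
    finally show "nv (Q w0 - Q w1) \<le> nv ?d" by simp
  qed
  also have "nv ?d < real p * nv ?d" using d0 pp by simp
  finally have "nv ?r < nv (c * ?E)" using ncE by simp
  hence "nv (?r + c * ?E) = nv (c * ?E)" by (rule nv_strict)
  moreover have "F w0 - F w1 = ?r + c * ?E"
    unfolding F_def using Pl_diff[of w0 w1] by (simp add: algebra_simps)
  ultimately show ?thesis using ncE by simp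
qed

lemma K3:
  assumes u: "nv (w0 - 1) \<le> 1 / real p" "nv (w1 - 1) \<le> 1 / real p"
  shows "nv (F w0 - F w1 - (of_nat p + 1 - c) * (w0 - w1)) \<le> nv (w0 - w1)"
proof -
  let ?d = "w0 - w1"
  have pp: "real p \<ge> 2" using p2 by simp
  have ip: "1 / real p \<le> 1" using pp by simp
  have n0: "nv w0 \<le> 1"
  proof -
    have "nv ((w0 - 1) + 1) \<le> 1" by (rule nv_add_le) (use u ip in auto)
    thus ?thesis by simp
  qed
  have n1: "nv w1 \<le> 1"
  proof -
    have "nv ((w1 - 1) + 1) \<le> 1" by (rule nv_add_le) (use u ip in auto)
    thus ?thesis by simp
  qed
  have Dp: "nv (w0 ^ p - w1 ^ p) \<le> nv ?d" by (rule nv_pow_diff1) (use n0 n1 in auto)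
  have Dp1: "nv (w0 ^ (p+1) - w1 ^ (p+1)) \<le> nv ?d" by (rule nv_pow_diff1) (use n0 n1 in auto)
  have w0p: "nv (w0 ^ p - 1) \<le> 1 / real p"
  proof -
    have "nv (w0 ^ p - 1 ^ p) \<le> nv (w0 - 1)" by (rule nv_pow_diff1) (use n0 in auto)
    thus ?thesis using u by simp
  qed
  let ?I = "(w0 ^ p - 1) * ?d + (w1 - 1) * (w0 ^ p - w1 ^ p)"
  have nI: "nv ?I \<le> 1 / real p * nv ?d"
  proof (rule nv_add_le)
    show "nv ((w0 ^ p - 1) * ?d) \<le> 1 / real p * nv ?d" unfolding nv_mult
      by (rule mult_right_mono[OF w0p]) simp
    show "nv ((w1 - 1) * (w0 ^ p - w1 ^ p)) \<le> 1 / real p * nv ?d" unfolding nv_mult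
      by (rule mult_mono[OF u(2) Dp]) (use pp in auto)
  qed
  have ncI: "nv (c * - ?I) \<le> nv ?d"
  proof -
    have "nv (c * - ?I) = real p * nv ?I" unfolding nv_mult nv_c nv_minus ..
    also have "\<dots> \<le> real p * (1 / real p * nv ?d)" by (rule mult_left_mono[OF nI]) simp
    also have "\<dots> = nv ?d" using pp by simp
    finally show ?thesis .
  qed
  have nA: "nv ((w0 ^ (p+1) - w1 ^ (p+1)) - of_nat (p+1) * ?d) \<le> nv ?d"
  proof (rule nv_diff_le[OF Dp1])
    show "nv (of_nat (p+1) * ?d) \<le> nv ?d" unfolding nv_mult
      using mult_right_mono[OF nv_of_nat_le[of "p+1"], of "nv ?d"] by simp
  qed
  have nQ: "nv (Q w0 - Q w1) \<le> nv ?d"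
  proof -
    have "nv (Q w0 - Q w1) \<le> NB * nv ?d" by (rule Q_lip) (use n0 n1 in auto)
    also have "\<dots> \<le> 1 * nv ?d" by (rule mult_right_mono) (use NB_lt1 in auto)
    finally show ?thesis by simp
  qed
  have eq: "F w0 - F w1 - (of_nat p + 1 - c) * ?d
      = (((w0 ^ (p+1) - w1 ^ (p+1)) - of_nat (p+1) * ?d) + c * - ?I) + (Q w0 - Q w1)"
  proof -
    have "F w0 - F w1 = (w0 ^ (p+1) - w1 ^ (p+1)) + c * ((w0 ^ p - w1 ^ p) - (w0 ^ (p+1) - w1 ^ (p+1))) + (Q w0 - Q w1)"
      unfolding F_def using Pl_diff[of w0 w1] by (simp add: algebra_simps)
    also have "(w0 ^ p - w1 ^ p) - (w0 ^ (p+1) - w1 ^ (p+1)) = - ?I - ?d"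
      unfolding E_id by (simp add: algebra_simps)
    finally show ?thesis by (simp add: algebra_simps)
  qed
  show ?thesis unfolding eq by (intro nv_add_le nA ncI nQ)
qed

end


context cpQ begin

definition "r = nv (Q 1) / real p"
definition "L = of_nat p - c"
definition "T u = u - (F (1 + u) - (1 + u)) / L"

lemma r_props: "r \<ge> 0" "r < 1 / real p" "r < 1"
proof -
  have pp: "real p \<ge> 2" using p2 by simp
  show "r \<ge> 0" unfolding r_def by simp
  have "nv (Q 1) < 1" using Q1_bound NB_lt1 by linarith
  thus "r < 1 / real p" unfolding r_def using pp by (simp add: divide_strict_right_mono)
  moreover have "1 / real p \<le> 1" using pp by simp
  ultimately show "r < 1" by linarith
qed

lemma nv_L: "nv L = real p"
proof -
  have pp: "real p \<ge> 2" using p2 by simp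
  have "1 / real p < 1" using pp by simp
  also have "1 < real p" using pp by simp
  finally have "nv (of_nat p :: 'a) < nv (- c)" unfolding nv_p nv_minus nv_c .
  hence "nv (- c + of_nat p) = nv (- c)" by (rule nv_strict')
  thus ?thesis unfolding L_def using nv_c by simp
qed

lemma L_nz: "L \<noteq> 0" using nv_L p2 by auto

lemma F1: "F 1 = 1 + Q 1" unfolding F_def Pl_def by (simp add: algebra_simps)

lemma T_diff: "T u - T v = - (F (1 + u) - F (1 + v) - (of_nat p + 1 - c) * ((1 + u) - (1 + v))) / L"
proof -
  have "T u - T v = (L * (u - v) - (F (1 + u) - F (1 + v)) + (u - v)) / L"
    unfolding T_def using L_nz by (simp add: field_simps)
  also have "L * (u - v) - (F (1 + u) - F (1 + v)) + (u - v) = - (F (1 + u) - F (1 + v) - (of_nat p + 1 - c) * ((1 + u) - (1 + v)))"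
    unfolding L_def by (simp add: algebra_simps)
  finally show ?thesis .
qed

lemma T_contr:
  assumes "nv u \<le> 1 / real p" "nv v \<le> 1 / real p"
  shows "nv (T u - T v) \<le> nv (u - v) / real p"
proof -
  have "nv (F (1 + u) - F (1 + v) - (of_nat p + 1 - c) * ((1 + u) - (1 + v))) \<le> nv ((1 + u) - (1 + v))"
    by (rule K3) (use assms in simp_all)
  thus ?thesis unfolding T_diff nv_divide nv_minus nv_L using p2
    by (simp add: divide_right_mono)
qed

lemma T0: "nv (T 0) = r"
proof -
  have "T 0 = - Q 1 / L" unfolding T_def by (simp add: F1)
  thus ?thesis unfolding r_def by (simp add: nv_divide nv_L)
qed

lemma T_ball: "nv u \<le> r \<Longrightarrow> nv (T u) \<le> r"
proof -
  assume u: "nv u \<le> r"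
  have pp: "real p \<ge> 2" using p2 by simp
  have "nv (T u - T 0) \<le> nv (u - 0) / real p" by (rule T_contr) (use u r_props in auto)
  also have "\<dots> = nv u / real p" by simp
  also have "\<dots> \<le> nv u / 1" by (rule divide_left_mono) (use pp in auto)
  also have "\<dots> \<le> r" using u by simp
  finally have a: "nv (T u - T 0) \<le> r" .
  have "nv ((T u - T 0) + T 0) \<le> r" by (rule nv_add_le[OF a]) (simp add: T0)
  thus ?thesis by simp
qed

lemma fix_exists: "\<exists>h. nv (h - 1) \<le> r \<and> F h = h"
proof -
  have pp: "real p \<ge> 2" using p2 by simp
  define X where "X n = (T ^^ n) 0" for n
  have XS: "X (Suc n) = T (X n)" for n unfolding X_def by simp
  have Xr: "nv (X n) \<le> r" for n
    by (induction n) (simp_all add: XS T_ball r_props X_def[of 0])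
  have rp: "r \<le> 1 / real p" using r_props by simp
  have Xp: "nv (X n) \<le> 1 / real p" for n using Xr[of n] rp by linarith
  have Xstep: "nv (X (Suc n) - X n) \<le> r / real p ^ n" for n
  proof (induction n)
    case 0 then show ?case by (simp add: XS X_def[of 0] T0)
  next
    case (Suc n)
    have "nv (X (Suc (Suc n)) - X (Suc n)) \<le> nv (X (Suc n) - X n) / real p"
      unfolding XS[of "Suc n"] XS[of n] by (rule T_contr) (simp_all only: Xp flip: XS)
    also have "\<dots> \<le> r / real p ^ n / real p" by (rule divide_right_mono[OF Suc]) simp
    also have "\<dots> = r / real p ^ Suc n" by simp
    finally show ?case .
  qed
  have Xc: "nv (X (n + k) - X n) \<le> r / real p ^ n" for n k
  proof (induction k)
    case 0 then show ?case using r_props by simp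
  next
    case (Suc k)
    have "r / real p ^ (n + k) \<le> r / real p ^ n"
      by (rule divide_left_mono) (use r_props pp in \<open>auto intro: power_increasing\<close>)
    hence a: "nv (X (Suc (n + k)) - X (n + k)) \<le> r / real p ^ n" using Xstep[of "n+k"] by linarith
    have "X (n + Suc k) - X n = (X (Suc (n + k)) - X (n + k)) + (X (n + k) - X n)" by simp
    thus ?case using nv_add_le[OF a Suc] by simp
  qed
  have lim0: "(\<lambda>n. r / real p ^ n) \<longlonglongrightarrow> 0" by (rule LIMSEQ_divide_realpow_zero) (use pp in simp)
  have cauchy: "\<forall>e>0. \<exists>N. \<forall>m\<ge>N. \<forall>n\<ge>N. nv (X m - X n) < e"
  proof (intro allI impI)
    fix e :: real assume e: "e > 0"
    have "eventually (\<lambda>n. r / real p ^ n < e) sequentially" by (rule order_tendstoD(2)[OF lim0 e])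
    then obtain N0 where N0: "\<And>n. n \<ge> N0 \<Longrightarrow> r / real p ^ n < e" using eventually_sequentially by auto
    show "\<exists>N. \<forall>m\<ge>N. \<forall>n\<ge>N. nv (X m - X n) < e"
    proof (intro exI allI impI)
      fix m n assume m: "m \<ge> N0" and n: "n \<ge> N0"
      show "nv (X m - X n) < e"
      proof (cases "m \<ge> n")
        case True
        have "X m = X (n + (m - n))" using True by simp
        hence "nv (X m - X n) \<le> r / real p ^ n" using Xc[of n "m - n"] by simp
        thus ?thesis using N0[OF n] by linarith
      next
        case False
        have "X n = X (m + (n - m))" using False by simp
        hence "nv (X n - X m) \<le> r / real p ^ m" using Xc[of m "n - m"] by simp
        thus ?thesis using N0[OF m] nv_diff_comm[of "X m" "X n"] by linarith
      qed
    qed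
  qed
  from complete[of X, OF cauchy] obtain z where z: "(\<lambda>n. nv (X n - z)) \<longlonglongrightarrow> 0" by blast
  have zr: "nv z \<le> r" by (rule lim_bound[OF z Xr])
  have "T z - z = 0"
  proof (rule zero_lim)
    fix n
    have e: "T z - z = (T z - T (X n)) + (X (Suc n) - z)" by (simp add: XS)
    have b: "nv (T z - T (X n)) \<le> nv (X n - z) / real p"
    proof -
      have zp: "nv z \<le> 1 / real p" using zr rp by linarith
      have "nv (T z - T (X n)) \<le> nv (z - X n) / real p" by (rule T_contr[OF zp Xp])
      thus ?thesis using nv_diff_comm[of z "X n"] by simp
    qed
    have "nv (T z - z) \<le> max (nv (T z - T (X n))) (nv (X (Suc n) - z))"
      unfolding e by (rule nv_add)
    also have "\<dots> \<le> nv (T z - T (X n)) + nv (X (Suc n) - z)" by (simp add: max_def)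
    finally show "nv (T z - z) \<le> nv (X n - z) / real p + nv (X (Suc n) - z)" using b by linarith
  next
    show "(\<lambda>n. nv (X n - z) / real p + nv (X (Suc n) - z)) \<longlonglongrightarrow> 0"
      using tendsto_add[OF tendsto_divide_zero[OF z] LIMSEQ_Suc[OF z]] by simp
  qed
  hence "(F (1 + z) - (1 + z)) / L = 0" unfolding T_def by simp
  hence "F (1 + z) = 1 + z" using L_nz by simp
  thus ?thesis using zr by (intro exI[of _ "1 + z"]) simp
qed

lemma fix_unique: "nv (h - 1) \<le> r \<Longrightarrow> F h = h \<Longrightarrow> nv (h' - 1) \<le> r \<Longrightarrow> F h' = h' \<Longrightarrow> h = h'"
proof -
  assume a: "nv (h - 1) \<le> r" "F h = h" "nv (h' - 1) \<le> r" "F h' = h'"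
  have "nv (F h - F h') = real p * nv (h - h')" by (rule K2) (use a r_props in auto)
  hence "nv (h - h') = real p * nv (h - h')" using a by simp
  hence "nv (h - h') = 0" using p2 by (simp add: algebra_simps)
  thus ?thesis by simp
qed

lemma hfix_prop: "nv (hfix p nv a l - 1) \<le> r \<and> F (hfix p nv a l) = hfix p nv a l"
proof -
  have ex: "\<exists>!h. nv (h - 1) \<le> r \<and> F h = h" using fix_exists fix_unique by blast
  show ?thesis unfolding hfix_def using theI'[OF ex] unfolding r_def F_def .
qed

end


context cpQ begin

lemma Qlam_diff: "Qlam p nv a l z0 - Qlam p nv a l z1 =
   F (z0 + hfix p nv a l - 1) - F (z1 + hfix p nv a l - 1)"
  unfolding Qlam_def Let_def F_def by (simp add: algebra_simps)

lemma part2: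
  assumes "nv (z0 - 1) < 1" "nv (z1 - 1) < 1"
  shows "nv (Qlam p nv a l z0 - Qlam p nv a l z1) = real p * nv (z0 - z1)"
proof -
  define h where "h = hfix p nv a l"
  have h1: "nv (h - 1) < 1" using hfix_prop r_props unfolding h_def by (meson order_le_less_trans)
  have w: "nv ((z + h - 1) - 1) < 1" if "nv (z - 1) < 1" for z
  proof -
    have "nv ((z - 1) + (h - 1)) \<le> max (nv (z - 1)) (nv (h - 1))" by (rule nv_add)
    moreover have "(z + h - 1) - 1 = (z - 1) + (h - 1)" by simp
    ultimately show ?thesis using that h1 by simp
  qed
  have "nv (F (z0 + h - 1) - F (z1 + h - 1)) = real p * nv ((z0 + h - 1) - (z1 + h - 1))"
    by (rule K2) (use w assms in auto)
  thus ?thesis unfolding Qlam_diff h_def[symmetric] by simp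
qed

lemma part1:
  assumes m: "m \<ge> 1" and z: "nv z0 = rhon p m" "nv z1 = rhon p m" and d: "nv (z0 - z1) \<le> Sc p"
  shows "nv (Qlam p nv a l z0 - Qlam p nv a l z1) \<le> rhon p (m - 1) * nv (z0 - z1)"
proof -
  obtain k where k: "m = Suc k" using m by (cases m) auto
  define h where "h = hfix p nv a l"
  define R where "R = rhon p m"
  have rf: "rho p > 0" "1 / real p \<le> rho p" "Sc p ^ (p - 1) = rho p / real p" "Sc p < rho p" "Sc p > 0"
    using real_facts[OF p2] by auto
  have Rf: "rho p < R" "R \<le> 1" using rhon_facts[OF p2, of m] unfolding R_def by auto
  have Rk: "real p * R ^ p = rhon p k" unfolding R_def k by (rule rhon_Suc_pow[OF p2])
  have rk: "rho p < rhon p k" using rhon_facts[OF p2, of k] by simp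
  have pp: "real p \<ge> 2" using p2 by simp
  have R0: "R \<ge> 0" using Rf rf by simp
  have h1: "nv (h - 1) \<le> R" using hfix_prop r_props rf Rf unfolding h_def by (smt (verit))
  have w: "nv (z + h - 1) \<le> R" if "nv z = R" for z
  proof -
    have "nv (z + (h - 1)) \<le> R" by (rule nv_add_le) (use that h1 in auto)
    thus ?thesis by (simp add: algebra_simps)
  qed
  let ?d = "z0 - z1"
  have dR: "nv ?d \<le> R" using d rf Rf by linarith
  have dp: "nv ?d ^ p \<le> R ^ p * nv ?d"
  proof -
    obtain j where j: "p = Suc j" using p2 by (cases p) auto
    have "nv ?d ^ j \<le> Sc p ^ j" by (rule power_mono[OF d]) simp
    also have "\<dots> = rho p / real p" using rf(3) j by simp
    also have "\<dots> \<le> R ^ p"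
    proof -
      have "rho p / real p \<le> rhon p k / real p" using rk pp by (simp add: divide_right_mono)
      thus ?thesis using Rk pp by (simp add: field_simps)
    qed
    finally have "nv ?d ^ j \<le> R ^ p" .
    hence "nv ?d ^ j * nv ?d \<le> R ^ p * nv ?d" by (rule mult_right_mono) simp
    thus ?thesis using j by (simp add: mult.commute)
  qed
  have NR: "NB \<le> real p * R ^ p" using NB_rho rk Rk by linarith
  have "nv (F (z0 + h - 1) - F (z1 + h - 1)) \<le> real p * R ^ p * nv ((z0 + h - 1) - (z1 + h - 1))"
    by (rule K1) (use w z R_def Rf rf dR dp NR in auto)
  thus ?thesis unfolding Qlam_diff h_def[symmetric] Rk k by simp
qed

end

theorem lemma3p9:
  fixes p :: nat and nv :: "'a::field_char_0 \<Rightarrow> real" and a :: "nat \<Rightarrow> 'a"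
    and rhat :: real and l :: 'a
  assumes "prime p"
    and "is_Cp p nv"
    and "\<exists>c. c \<noteq> 0 \<and> nv c = rhat" and "rhat > 1"
    and "in_HB nv rhat a" and "normB nv rhat a < rho p"
    and "nv (l - 1) < 1"
  shows "(\<forall>m z0 z1. m \<ge> 1 \<longrightarrow> nv z0 = rhon p m \<longrightarrow> nv z1 = rhon p m \<longrightarrow>
            nv (z0 - z1) \<le> Sc p \<longrightarrow>
            nv (Qlam p nv a l z0 - Qlam p nv a l z1) \<le> rhon p (m - 1) * nv (z0 - z1))
      \<and> (\<forall>z0 z1. nv (z0 - 1) < 1 \<longrightarrow> nv (z1 - 1) < 1 \<longrightarrow>
            nv (Qlam p nv a l z0 - Qlam p nv a l z1) = real p * nv (z0 - z1))"
proof -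
  interpret cpQ p nv a rhat l
    by unfold_locales (use assms in auto)
  show ?thesis using part1 part2 by blast
qed


end
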